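(* Assume (H1) for some $\alpha\in[0,1]$ and (H2)–(H4). Then: (1) (Sub-critical) If $\lambda\le\lambda_s$, there exists a unique $z\le z_s$ with $\lambda=\sum_{j\ge1}a_jQ_jz^{j+1}+a_1z^2$, and $(Q_iz^i)_{i\ge1}$ is a steady state. Moreover, if $b_i\le i\,a_i$ for all sufficiently large $i$, then $(Q_iz^i)_{i\ge1}$ is the unique steady state; if instead there is $\nu>1$ with $b_i>i^\nu a_i$ for all sufficiently large $i$, then there are infinitely many steady states. (2) (Super-critical) If $\lambda>\lambda_s$, there exists no steady state.
   Context: Let $\lambda\ge 0$ and let $(a_i)_{i\ge1}$, $(b_i)_{i\ge1}$ be sequences of nonnegative real numbers. Consider the infinite system of ODEs $\frac{d}{dt}C_1=\lambda-\sum_{j\ge1}a_jC_1C_j-a_1C_1^2$, $\frac{d}{dt}C_i=J_{i-1}-J_i$ for $i\ge2$, where $J_i=a_iC_1C_i-b_{i+1}C_{i+1}$ for $i\ge1$. A steady state is a sequence $C=(C_i)_{i\ge1}$ of nonnegative reals with $\sum_{i\ge1}a_iC_i<\infty$ such that $\lambda-\sum_{j\ge1}a_jC_1C_j-a_1C_1^2=0$ and $J_{i-1}=J_i$ for all $i\ge2$ (i.e. a constant-in-time solution). (H1): there exists $a\ge0$ such that $0\le a_i\le a\,i^\alpha$ and $b_i\ge0$ for all $i\ge1$. Detailed balance coefficients: $Q_1=1$, $Q_i=\prod_{j=2}^i\frac{a_{j-1}}{b_j}$ for $i\ge2$. $z_s\in[0,+\infty]$ is the radius of convergence of the power series $\sum_i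 a_iQ_iz^i$, and $\lambda_s:=\sup_{z\le z_s}\big(\sum_{j\ge1}a_jQ_jz^{j+1}+a_1z^2\big)$. (H2): $\inf_i a_i=\underline a>0$ and $\inf_i b_i=\underline b>0$. (H3): $\lim_{i\to\infty}Q_{i+1}/Q_i=1/z_s$. (H4): there is $l>0$ with $\lim_{i\to\infty}a_{i+1}/a_i=l$. *)

theory Defs
  imports "HOL-Analysis.Analysis"
begin

text \<open>Sequences are functions nat => real; only indices i >= 1 are meaningful.
  Value at index 0 is ignored (steady states are normalised by C 0 = 0).\<close>

definition Qc :: "(nat \<Rightarrow> real) \<Rightarrow> (nat \<Rightarrow> real) \<Rightarrow> nat \<Rightarrow> real" where
  "Qc a b i = (\<Prod>j=2..i. a (j - 1) / b j)"

definition zs :: "(nat \<Rightarrow> real) \<Rightarrow> (nat \<Rightarrow> real) \<Rightarrow> ereal" where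
  "zs a b = conv_radius (\<lambda>i. if i = 0 then 0 else a i * Qc a b i)"

definition Fz :: "(nat \<Rightarrow> real) \<Rightarrow> (nat \<Rightarrow> real) \<Rightarrow> real \<Rightarrow> ereal" where
  "Fz a b z = (\<Sum>j. ereal (a (Suc j) * Qc a b (Suc j) * z ^ (Suc j + 1))) + ereal (a 1 * z\<^sup>2)"

definition lambda_s :: "(nat \<Rightarrow> real) \<Rightarrow> (nat \<Rightarrow> real) \<Rightarrow> ereal" where
  "lambda_s a b = (SUP z \<in> {z. 0 \<le> z \<and> ereal z \<le> zs a b}. Fz a b z)"

definition Jflux :: "(nat \<Rightarrow> real) \<Rightarrow> (nat \<Rightarrow> real) \<Rightarrow> (nat \<Rightarrow> real) \<Rightarrow> nat \<Rightarrow> real" where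
  "Jflux a b C i = a i * C 1 * C i - b (Suc i) * C (Suc i)"

definition steady_state ::
  "real \<Rightarrow> (nat \<Rightarrow> real) \<Rightarrow> (nat \<Rightarrow> real) \<Rightarrow> (nat \<Rightarrow> real) \<Rightarrow> bool" where
  "steady_state lam a b C \<longleftrightarrow>
     (\<forall>i\<ge>1. 0 \<le> C i) \<and>
     summable (\<lambda>j. a (Suc j) * C (Suc j)) \<and>
     lam - (\<Sum>j. a (Suc j) * C 1 * C (Suc j)) - a 1 * (C 1)\<^sup>2 = 0 \<and>
     (\<forall>i\<ge>2. Jflux a b C (i - 1) = Jflux a b C i)"

end

theory Submission
  imports Defs
begin


locale SS =
  fixes a b :: "nat \<Rightarrow> real"
  assumes apos: "\<And>i. 1 \<le> i \<Longrightarrow> 0 < a i"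
      and bpos: "\<And>i. 1 \<le> i \<Longrightarrow> 0 < b i"
begin

abbreviation "Q \<equiv> Qc a b"
definition trm :: "real \<Rightarrow> nat \<Rightarrow> real" where
  "trm z j = a (Suc j) * Q (Suc j) * z ^ (Suc j + 1)"
definition Sr :: "real \<Rightarrow> real" where "Sr z = suminf (trm z)"

lemma Q_pos: "0 < Q i"
  unfolding Qc_def by (rule prod_pos) (auto intro!: divide_pos_pos apos bpos)

lemma Q1: "Q 1 = 1" unfolding Qc_def by simp

lemma Q_Suc: "1 \<le> i \<Longrightarrow> Q (Suc i) = Q i * (a i / b (Suc i))"
proof -
  assume "1 \<le> i"
  then have "{2..Suc i} = insert (Suc i) {2..i}" by auto
  then show ?thesis unfolding Qc_def by (simp add: mult.commute)
qed

lemma trm_nonneg: "0 \<le> z \<Longrightarrow> 0 \<le> trm z j"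
  unfolding trm_def using apos[of "Suc j"] Q_pos[of "Suc j"] by simp

lemma trm_mono: "0 \<le> z \<Longrightarrow> z \<le> w \<Longrightarrow> trm z j \<le> trm w j"
  unfolding trm_def using apos[of "Suc j"] Q_pos[of "Suc j"]
  by (intro mult_left_mono power_mono) auto

lemma Fz_eq: "Fz a b z = (\<Sum>j. ereal (trm z j)) + ereal (a 1 * z\<^sup>2)"
  unfolding Fz_def trm_def ..

lemma Fz_real:
  assumes "0 \<le> z" "Fz a b z \<noteq> \<infinity>"
  shows "summable (trm z)" "Fz a b z = ereal (Sr z + a 1 * z\<^sup>2)"
proof -
  have ne: "(\<Sum>j. ereal (trm z j)) \<noteq> \<infinity>" using assms(2) unfolding Fz_eq by auto
  show "summable (trm z)" using summable_ereal[OF trm_nonneg[OF assms(1)] ne] .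
  show "Fz a b z = ereal (Sr z + a 1 * z\<^sup>2)"
    unfolding Fz_eq Sr_def using suminf_ereal[OF trm_nonneg[OF assms(1)] ne] by simp
qed

lemma Fz_real':
  assumes "summable (trm z)"
  shows "Fz a b z = ereal (Sr z + a 1 * z\<^sup>2)"
  unfolding Fz_eq Sr_def using suminf_ereal'[OF assms] by simp

lemma Fz_ge: "0 \<le> z \<Longrightarrow> ereal (a 1 * z\<^sup>2) \<le> Fz a b z"
proof -
  assume h: "0 \<le> z"
  have "0 \<le> (\<Sum>j. ereal (trm z j))" by (rule suminf_0_le) (simp add: trm_nonneg[OF h])
  then show ?thesis unfolding Fz_eq using add_mono[of 0 _ "ereal (a 1 * z\<^sup>2)"] by simp
qed

lemma Fz_mono: "0 \<le> z \<Longrightarrow> z \<le> w \<Longrightarrow> Fz a b z \<le> Fz a b w"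
proof -
  assume h: "0 \<le> z" "z \<le> w"
  have "(\<Sum>j. ereal (trm z j)) \<le> (\<Sum>j. ereal (trm w j))"
    using h by (intro suminf_le_pos) (auto intro: trm_mono trm_nonneg)
  moreover have "a 1 * z\<^sup>2 \<le> a 1 * w\<^sup>2" using h apos[of 1]
    by (intro mult_left_mono power_mono) auto
  ultimately show ?thesis unfolding Fz_eq by (intro add_mono) auto
qed

lemma Fz0: "Fz a b 0 = 0"
  unfolding Fz_eq trm_def by (simp add: zero_ereal_def[symmetric])

lemma Sr_strict:
  assumes "0 \<le> z" "z < w" "summable (trm w)"
  shows "summable (trm z)" "Sr z + a 1 * z\<^sup>2 < Sr w + a 1 * w\<^sup>2"
proof -
  show s: "summable (trm z)"
    by (rule summable_comparison_test'[OF assms(3), where N=0]) (use assms in \<open>auto simp: abs_of_nonneg trm_nonneg intro: trm_mono\<close>)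
  have "Sr z \<le> Sr w" unfolding Sr_def using assms s
    by (intro suminf_le) (auto intro: trm_mono)
  moreover have "a 1 * z\<^sup>2 < a 1 * w\<^sup>2" using assms apos[of 1]
    by (intro mult_strict_left_mono power_strict_mono) auto
  ultimately show "Sr z + a 1 * z\<^sup>2 < Sr w + a 1 * w\<^sup>2" by simp
qed

lemma Fz_unique:
  assumes "0 \<le> z1" "0 \<le> z2" "Fz a b z1 = ereal lam" "Fz a b z2 = ereal lam"
  shows "z1 = z2"
proof (rule ccontr)
  assume ne: "z1 \<noteq> z2"
  have r1: "summable (trm z1)" "Fz a b z1 = ereal (Sr z1 + a 1 * z1\<^sup>2)" using Fz_real[of z1] assms by auto
  have r2: "summable (trm z2)" "Fz a b z2 = ereal (Sr z2 + a 1 * z2\<^sup>2)" using Fz_real[of z2] assms by auto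
  show False
  proof (cases "z1 < z2")
    case True
    then show ?thesis using Sr_strict[OF assms(1) True r2(1)] r1 r2 assms by simp
  next
    case False
    then have "z2 < z1" using ne by simp
    then show ?thesis using Sr_strict[OF assms(2) _ r1(1)] r1 r2 assms by simp
  qed
qed

lemma zs_ge:
  assumes "summable (\<lambda>j. a (Suc j) * Q (Suc j) * c ^ Suc j)" "0 \<le> c"
  shows "ereal c \<le> zs a b"
proof -
  let ?g = "\<lambda>i. if i = 0 then 0 else a i * Q i"
  have "summable (\<lambda>n. ?g (Suc n) * c ^ Suc n)" using assms(1) by simp
  then have "summable (\<lambda>n. ?g n * c ^ n)" by (subst (asm) summable_Suc_iff)
  from conv_radius_geI[OF this] show ?thesis using assms(2) unfolding zs_def by simp
qed

lemma flux_const: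
  assumes "steady_state lam a b C" "1 \<le> i"
  shows "Jflux a b C i = Jflux a b C 1"
  using assms(2)
proof (induction i rule: dec_induct)
  case (step n)
  have all: "\<forall>i\<ge>2. Jflux a b C (i - 1) = Jflux a b C i" using assms(1) unfolding steady_state_def by blast
  have "Jflux a b C (Suc n - 1) = Jflux a b C (Suc n)" using all[rule_format, of "Suc n"] step.hyps(1) by simp
  then show ?case using step by simp
qed simp

lemma ss_nonneg: "steady_state lam a b C \<Longrightarrow> 1 \<le> i \<Longrightarrow> 0 \<le> C i"
  unfolding steady_state_def by auto

lemma ss_summable: "steady_state lam a b C \<Longrightarrow> summable (\<lambda>j. a (Suc j) * C (Suc j))"
  unfolding steady_state_def by auto

lemma ss_lam: "steady_state lam a b C \<Longrightarrow> lam = (\<Sum>j. a (Suc j) * C 1 * C (Suc j)) + a 1 * (C 1)\<^sup>2"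
  unfolding steady_state_def by auto

lemma J_nonpos:
  assumes ss: "steady_state lam a b C"
  shows "Jflux a b C 1 \<le> 0"
proof (rule ccontr)
  define J where "J = Jflux a b C 1"
  assume "\<not> Jflux a b C 1 \<le> 0"
  then have Jp: "0 < J" unfolding J_def by simp
  have le: "J \<le> a i * C 1 * C i" if "1 \<le> i" for i
  proof -
    have "J = a i * C 1 * C i - b (Suc i) * C (Suc i)"
      using flux_const[OF ss that] unfolding J_def Jflux_def by simp
    moreover have "0 \<le> b (Suc i) * C (Suc i)" using bpos[of "Suc i"] ss_nonneg[OF ss, of "Suc i"] by simp
    ultimately show ?thesis by simp
  qed
  have c0: "0 \<le> C 1" using ss_nonneg[OF ss, of 1] by simp
  have cp: "0 < C 1"
  proof (rule ccontr)
    assume "\<not> 0 < C 1"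
    then have "C 1 = 0" using c0 by simp
    then show False using le[of 1] Jp by simp
  qed
  have ge: "J / C 1 \<le> a (Suc j) * C (Suc j)" for j
    using le[of "Suc j"] cp by (simp add: divide_le_eq mult.commute mult.left_commute)
  have "(\<lambda>j. a (Suc j) * C (Suc j)) \<longlonglongrightarrow> 0"
    using summable_LIMSEQ_zero[OF ss_summable[OF ss]] .
  then have "eventually (\<lambda>j. a (Suc j) * C (Suc j) < J / C 1) sequentially"
    using Jp cp by (intro order_tendstoD(2)) auto
  then obtain j where "a (Suc j) * C (Suc j) < J / C 1" by (meson eventually_sequentially order_refl)
  with ge[of j] show False by simp
qed

lemma J_neg:
  assumes ss: "steady_state lam a b C" and Jn: "Jflux a b C 1 < 0"
  shows "summable (\<lambda>j. a (Suc j) / b (Suc j))"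
proof -
  define J where "J = Jflux a b C 1"
  have Jn': "0 < - J" using Jn unfolding J_def by simp
  have "summable (\<lambda>j. a (Suc j) * C (Suc j) / (- J))"
    using ss_summable[OF ss] by (rule summable_divide)
  then show ?thesis
  proof (rule summable_comparison_test'[where N=1])
    fix n :: nat assume n: "1 \<le> n"
    have "J = a n * C 1 * C n - b (Suc n) * C (Suc n)"
      using flux_const[OF ss n] unfolding J_def Jflux_def by simp
    moreover have "0 \<le> a n * C 1 * C n" using apos[OF n] ss_nonneg[OF ss, of 1] ss_nonneg[OF ss n] by simp
    ultimately have "- J \<le> b (Suc n) * C (Suc n)" by simp
    moreover have bp: "0 < b (Suc n)" using bpos[of "Suc n"] by simp
    ultimately have "- J / b (Suc n) \<le> C (Suc n)" by (subst pos_divide_le_eq[OF bp]) (simp add: mult.commute)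
    then have "a (Suc n) * (- J / b (Suc n)) \<le> a (Suc n) * C (Suc n)"
      using apos[of "Suc n"] by (intro mult_left_mono) auto
    then have "a (Suc n) / b (Suc n) * (- J) \<le> a (Suc n) * C (Suc n)" by simp
    then have "a (Suc n) / b (Suc n) \<le> a (Suc n) * C (Suc n) / (- J)"
      by (subst pos_le_divide_eq[OF Jn'])
    moreover have "0 \<le> a (Suc n) / b (Suc n)" using apos[of "Suc n"] bpos[of "Suc n"] by simp
    ultimately show "norm (a (Suc n) / b (Suc n)) \<le> a (Suc n) * C (Suc n) / (- J)" by simp
  qed
qed

lemma J_zero:
  assumes ss: "steady_state lam a b C" and Jz: "Jflux a b C 1 = 0"
  shows "\<forall>i\<ge>1. C i = Q i * C 1 ^ i"
proof (intro allI impI)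
  fix i :: nat assume "1 \<le> i"
  then show "C i = Q i * C 1 ^ i"
  proof (induction i rule: dec_induct)
    case base then show ?case using Q1 by simp
  next
    case (step n)
    have "0 = a n * C 1 * C n - b (Suc n) * C (Suc n)"
      using flux_const[OF ss step.hyps(1)] Jz unfolding Jflux_def by simp
    then have "C (Suc n) = a n * C 1 * C n / b (Suc n)" using bpos[of "Suc n"] by (simp add: field_simps)
    also have "\<dots> = Q (Suc n) * C 1 ^ Suc n" using step Q_Suc[OF step.hyps(1)] by (simp add: field_simps)
    finally show ?case .
  qed
qed

lemma J_zero_F:
  assumes ss: "steady_state lam a b C" and Jz: "Jflux a b C 1 = 0"
  shows "0 \<le> C 1" "ereal (C 1) \<le> zs a b" "Fz a b (C 1) = ereal lam"
proof -
  define c where "c = C 1"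
  have Ci: "C (Suc j) = Q (Suc j) * c ^ Suc j" for j
  proof -
    have "1 \<le> Suc j" by simp
    from J_zero[OF ss Jz, rule_format, OF this] show ?thesis unfolding c_def .
  qed
  show c0: "0 \<le> C 1" using ss_nonneg[OF ss, of 1] by simp
  have s1: "summable (\<lambda>j. a (Suc j) * Q (Suc j) * c ^ Suc j)"
    using ss_summable[OF ss] unfolding Ci by (simp add: mult.assoc)
  show "ereal (C 1) \<le> zs a b" using zs_ge[OF s1] c0 unfolding c_def by simp
  have teq: "trm c j = c * (a (Suc j) * Q (Suc j) * c ^ Suc j)" for j unfolding trm_def by simp
  have st: "summable (trm c)" unfolding teq by (intro summable_mult s1)
  have "lam = (\<Sum>j. trm c j) + a 1 * c\<^sup>2"
    using ss_lam[OF ss] unfolding c_def[symmetric] Ci teq by (simp add: mult_ac)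
  then show "Fz a b (C 1) = ereal lam" using Fz_real'[OF st] unfolding c_def Sr_def by simp
qed

definition gco :: "nat \<Rightarrow> real" where "gco i = (if i = 0 then 0 else a i * Q i)"

lemma zs_gco: "zs a b = conv_radius gco" unfolding zs_def gco_def ..

lemma inside:
  assumes "0 \<le> y" "ereal y < zs a b"
  shows "summable (\<lambda>n. gco n * y ^ n)" "summable (trm y)" "Sr y = y * (\<Sum>n. gco n * y ^ n)"
proof -
  show s: "summable (\<lambda>n. gco n * y ^ n)"
    using assms by (intro summable_in_conv_radius) (simp add: zs_gco)
  then have s': "summable (\<lambda>n. gco (Suc n) * y ^ Suc n)" by (subst summable_Suc_iff)
  have teq: "trm y = (\<lambda>j. y * (gco (Suc j) * y ^ Suc j))" unfolding trm_def gco_def by (auto simp: fun_eq_iff)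
  show "summable (trm y)" unfolding teq by (intro summable_mult s')
  have "(\<Sum>n. gco (Suc n) * y ^ Suc n) = (\<Sum>n. gco n * y ^ n)"
    using suminf_split_head[OF s] by (simp add: gco_def)
  then show "Sr y = y * (\<Sum>n. gco n * y ^ n)" unfolding Sr_def teq
    using suminf_mult[OF s', of y] by simp
qed

lemma cont_F:
  assumes "0 \<le> w" "ereal w < zs a b"
  shows "continuous_on {0..w} (\<lambda>y. Sr y + a 1 * y\<^sup>2)"
proof -
  obtain K where K: "ereal w < ereal K" "ereal K < zs a b" using ereal_dense2[OF assms(2)] by blast
  have K0: "0 \<le> K" using K assms by simp
  have sK: "summable (\<lambda>n. gco n * K ^ n)" using inside[OF K0 K(2)] by simp
  have "continuous_on {0..w} (\<lambda>y. y * (\<Sum>n. gco n * y ^ n) + a 1 * y\<^sup>2)"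
  proof (intro continuous_at_imp_continuous_on ballI)
    fix x assume "x \<in> {0..w}"
    then have "norm x < norm K" using K by auto
    then have "isCont (\<lambda>x. \<Sum>n. gco n * x ^ n) x" by (rule isCont_powser[OF sK])
    then show "isCont (\<lambda>y. y * (\<Sum>n. gco n * y ^ n) + a 1 * y\<^sup>2) x"
      by (intro continuous_intros) auto
  qed
  then show ?thesis
  proof (rule continuous_on_eq)
    fix y assume "y \<in> {0..w}"
    then have y: "0 \<le> y" "y \<le> w" by auto
    have "ereal y < zs a b" by (rule le_less_trans[OF _ assms(2)]) (use y in simp)
    note y = y(1) this
    then show "y * (\<Sum>n. gco n * y ^ n) + a 1 * y\<^sup>2 = Sr y + a 1 * y\<^sup>2" using inside by simp
  qed
qed

lemma Sr0: "Sr 0 = 0" unfolding Sr_def trm_def by simp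

end

context SS begin
lemma exists_z:
  assumes lam0: "0 \<le> lam" and le: "ereal lam \<le> lambda_s a b"
  shows "\<exists>z. 0 \<le> z \<and> ereal z \<le> zs a b \<and> ereal lam = Fz a b z"
proof (cases "\<exists>w. 0 \<le> w \<and> ereal w < zs a b \<and> ereal lam \<le> Fz a b w")
  case True
  then obtain w where w: "0 \<le> w" "ereal w < zs a b" "ereal lam \<le> Fz a b w" by blast
  have Fw: "Fz a b w = ereal (Sr w + a 1 * w\<^sup>2)" using Fz_real'[OF inside(2)[OF w(1,2)]] .
  have c1: "(\<lambda>y. Sr y + a 1 * y\<^sup>2) 0 \<le> lam" using Sr0 lam0 by simp
  have c2: "lam \<le> (\<lambda>y. Sr y + a 1 * y\<^sup>2) w" using w(3) Fw by simp
  obtain z where z: "0 \<le> z" "z \<le> w" "Sr z + a 1 * z\<^sup>2 = lam"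
    using IVT'[OF c1 c2 w(1) cont_F[OF w(1,2)]] by blast
  have zz: "ereal z < zs a b" by (rule le_less_trans[OF _ w(2)]) (use z in simp)
  have "Fz a b z = ereal lam" using Fz_real'[OF inside(2)[OF z(1) zz]] z by simp
  then show ?thesis using z zz by (intro exI[of _ z]) auto
next
  case False
  have lt: "Fz a b w < ereal lam" if "0 \<le> w" "ereal w < zs a b" for w
  proof -
    have "\<not> ereal lam \<le> Fz a b w" using False that by blast
    then show ?thesis by (simp add: not_le)
  qed
  define w0 where "w0 = sqrt (lam / a 1) + 1"
  have a1: "0 < a 1" using apos by simp
  have q: "0 \<le> lam / a 1" using lam0 a1 by simp
  have w0: "0 \<le> w0" unfolding w0_def using real_sqrt_ge_zero[OF q] by simp
  have "lam \<le> a 1 * w0\<^sup>2"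
  proof -
    have "(sqrt (lam / a 1))\<^sup>2 \<le> w0\<^sup>2" by (rule power_mono) (use real_sqrt_ge_zero[OF q] in \<open>auto simp: w0_def\<close>)
    then have "lam / a 1 \<le> w0\<^sup>2" using real_sqrt_pow2[OF q] by simp
    then have "lam \<le> w0\<^sup>2 * a 1" by (metis a1 pos_divide_le_eq)
    then show ?thesis by (simp add: algebra_simps)
  qed
  then have "ereal lam \<le> ereal (a 1 * w0\<^sup>2)" by simp
  then have l0: "ereal lam \<le> Fz a b w0" using Fz_ge[OF w0] by (rule order_trans)
  have fin: "zs a b \<noteq> \<infinity>"
  proof (rule notI)
    assume h: "zs a b = \<infinity>"
    have "ereal w0 < \<infinity>" by simp
    then have "ereal w0 < zs a b" by (simp only: h)
    then have "Fz a b w0 < ereal lam" by (rule lt[OF w0])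
    then show False by (rule notE[OF leD[OF l0]])
  qed
  have zsn: "0 \<le> zs a b" unfolding zs_gco by (rule conv_radius_nonneg)
  define r where "r = real_of_ereal (zs a b)"
  have ab: "\<bar>zs a b\<bar> \<noteq> \<infinity>" by (subst abs_ereal_ge0[OF zsn]) (rule fin)
  have r: "zs a b = ereal r" unfolding r_def using ereal_real'[OF ab] by (rule sym)
  have r0: "0 \<le> r" using zsn unfolding r by (simp only: ereal_less_eq(5))
  have "lambda_s a b \<le> Fz a b r"
    unfolding lambda_s_def
  proof (rule SUP_least)
    fix z assume "z \<in> {z. 0 \<le> z \<and> ereal z \<le> zs a b}"
    then have "0 \<le> z" "ereal z \<le> ereal r" unfolding r by auto
    then have "0 \<le> z" "z \<le> r" by simp_all
    then show "Fz a b z \<le> Fz a b r" by (rule Fz_mono)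
  qed
  then have lamF: "ereal lam \<le> Fz a b r" by (rule order_trans[OF le])
  have part: "(\<Sum>j<N. trm r j) + a 1 * r\<^sup>2 \<le> lam" for N
  proof (cases "r = 0")
    case True then show ?thesis using lam0 by (simp add: trm_def)
  next
    case False
    then have rp: "0 < r" using r0 by simp
    let ?p = "\<lambda>x. (\<Sum>j<N. trm x j) + a 1 * x\<^sup>2"
    have "(?p \<longlongrightarrow> ?p r) (at_left r)" unfolding trm_def
      by (intro tendsto_intros)
    moreover have "eventually (\<lambda>x. ?p x \<le> lam) (at_left r)"
      using eventually_at_left_real[OF rp]
    proof (rule eventually_mono)
      fix x assume x: "x \<in> {0<..<r}"
      then have x0: "0 \<le> x" and xz: "ereal x < zs a b" using r by auto
      have st: "summable (trm x)" using inside(2)[OF x0 xz] .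
      have "(\<Sum>j<N. trm x j) \<le> Sr x" unfolding Sr_def
        using st by (intro sum_le_suminf) (auto intro: trm_nonneg x0)
      moreover have "ereal (Sr x + a 1 * x\<^sup>2) < ereal lam" using lt[OF x0 xz] Fz_real'[OF st] by simp
      ultimately show "?p x \<le> lam" by simp
    qed
    ultimately show "?p r \<le> lam" by (intro tendsto_upperbound) auto
  qed
  have sr: "summable (trm r)"
  proof (rule summableI_nonneg_bounded[where x="lam - a 1 * r\<^sup>2"])
    fix n show "0 \<le> trm r n" by (rule trm_nonneg[OF r0])
    show "sum (trm r) {..<n} \<le> lam - a 1 * r\<^sup>2" using part[of n] by linarith
  qed
  have "Sr r \<le> lam - a 1 * r\<^sup>2" unfolding Sr_def
  proof (rule suminf_le_const[OF sr])
    fix n show "sum (trm r) {..<n} \<le> lam - a 1 * r\<^sup>2" using part[of n] by linarith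
  qed
  then have "Fz a b r \<le> ereal lam" using Fz_real'[OF sr] by simp
  with lamF have "ereal lam = Fz a b r" by simp
  then show ?thesis using r r0 by (intro exI[of _ r]) auto
qed

end


primrec Dseq :: "(nat \<Rightarrow> real) \<Rightarrow> (nat \<Rightarrow> real) \<Rightarrow> real \<Rightarrow> nat \<Rightarrow> real" where
  "Dseq a b c 0 = 0"
| "Dseq a b c (Suc n) = (if n = 0 then 0 else (a n * c * Dseq a b c n + 1) / b (Suc n))"

context SS begin

lemma flux_Q: "1 \<le> i \<Longrightarrow> a i * c * (Q i * c ^ i) - b (Suc i) * (Q (Suc i) * c ^ Suc i) = 0"
  using Q_Suc[of i] bpos[of "Suc i"] by (simp add: field_simps)

lemma Qz_ss:
  assumes z0: "0 \<le> z" and Fz: "Fz a b z = ereal lam"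
  shows "steady_state lam a b (\<lambda>i. Q i * z ^ i)"
proof -
  have st: "summable (trm z)" and Fe: "Fz a b z = ereal (Sr z + a 1 * z\<^sup>2)" using Fz_real[OF z0] Fz by auto
  have teq: "trm z j = z * (a (Suc j) * (Q (Suc j) * z ^ Suc j))" for j unfolding trm_def by (simp add: mult_ac)
  have s1: "summable (\<lambda>j. a (Suc j) * (Q (Suc j) * z ^ Suc j))"
  proof (cases "z = 0")
    case True then show ?thesis by simp
  next
    case False
    have "summable (\<lambda>j. trm z j / z)" using st by (rule summable_divide)
    then show ?thesis using False unfolding teq by simp
  qed
  have lam: "lam = Sr z + a 1 * z\<^sup>2" using Fe Fz by simp
  have sum: "(\<Sum>j. a (Suc j) * (Q 1 * z ^ 1) * (Q (Suc j) * z ^ Suc j)) = Sr z"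
  proof -
    have "(\<lambda>j. a (Suc j) * (Q 1 * z ^ 1) * (Q (Suc j) * z ^ Suc j)) = trm z"
      by (rule ext) (simp add: Q1 Q1[unfolded One_nat_def] trm_def mult_ac)
    then show ?thesis unfolding Sr_def by simp
  qed
  show ?thesis unfolding steady_state_def
  proof (intro conjI allI impI)
    fix i :: nat assume "1 \<le> i" then show "0 \<le> Q i * z ^ i" using Q_pos[of i] z0 by simp
  next
    show "summable (\<lambda>j. a (Suc j) * (Q (Suc j) * z ^ Suc j))" by (rule s1)
  next
    show "lam - (\<Sum>j. a (Suc j) * (Q 1 * z ^ 1) * (Q (Suc j) * z ^ Suc j)) - a 1 * (Q 1 * z ^ 1)\<^sup>2 = 0"
      unfolding sum using lam Q1 by simp
  next
    fix i :: nat assume i: "2 \<le> i"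
    have "Jflux a b (\<lambda>i. Q i * z ^ i) (i - 1) = 0" unfolding Jflux_def
      using flux_Q[of "i - 1" z] i Q1 by (simp add: Suc_diff_1)
    moreover have "Jflux a b (\<lambda>i. Q i * z ^ i) i = 0" unfolding Jflux_def
      using flux_Q[of i z] i Q1 by simp
    ultimately show "Jflux a b (\<lambda>i. Q i * z ^ i) (i - 1) = Jflux a b (\<lambda>i. Q i * z ^ i) i" by simp
  qed
qed

abbreviation "D \<equiv> Dseq a b"

lemma D_nonneg: "0 \<le> c \<Longrightarrow> 0 \<le> D c n"
proof (induction n)
  case (Suc n)
  then show ?case using apos[of n] bpos[of "Suc n"]
    by (auto intro!: divide_nonneg_pos add_nonneg_nonneg mult_nonneg_nonneg)
qed simp

lemma D_flux: "1 \<le> n \<Longrightarrow> a n * c * D c n - b (Suc n) * D c (Suc n) = -1"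
  using bpos[of "Suc n"] by simp

lemma D2: "D c 2 = 1 / b 2"
  by (simp add: numeral_2_eq_2)

lemma D_summable:
  assumes c0: "0 \<le> c" and nu: "1 < \<nu>" and ev: "\<forall>\<^sub>F i in sequentially. b i > real i powr \<nu> * a i"
  shows "summable (\<lambda>j. a (Suc j) * D c (Suc j))"
proof -
  define x where "x n = a n * D c n" for n
  define r where "r n = a n / b n" for n
  have x0: "0 \<le> x n" if "1 \<le> n" for n unfolding x_def using apos[OF that] D_nonneg[OF c0] by simp
  have xrec: "x (Suc n) = r (Suc n) * (c * x n + 1)" if "1 \<le> n" for n
    unfolding x_def r_def using that by (simp add: field_simps)
  have ev1: "\<forall>\<^sub>F n in sequentially. r n \<le> real n powr (- \<nu>)"
    using ev eventually_gt_at_top[of 0]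
  proof (eventually_elim)
    case (elim n)
    then have n1: "1 \<le> n" by simp
    have bp: "0 < b n" using bpos[OF n1] .
    have "a n \<le> real n powr (- \<nu>) * b n"
    proof -
      have "real n powr \<nu> * a n \<le> b n" using elim by simp
      then have "real n powr (- \<nu>) * (real n powr \<nu> * a n) \<le> real n powr (- \<nu>) * b n"
        by (intro mult_left_mono) auto
      moreover have "real n powr (- \<nu>) * real n powr \<nu> = 1" using elim by (simp add: powr_add[symmetric])
      ultimately show ?thesis by (simp add: mult.assoc[symmetric])
    qed
    then show ?case unfolding r_def using bp by (simp add: divide_le_eq)
  qed
  have lim: "(\<lambda>n. real n powr (- \<nu>)) \<longlonglongrightarrow> 0"
    using nu by (intro tendsto_neg_powr filterlim_real_sequentially) auto
  have ev2: "\<forall>\<^sub>F n in sequentially. real n powr (- \<nu>) * (c + 1) \<le> 1 / 2"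
  proof -
    have "(\<lambda>n. real n powr (- \<nu>) * (c + 1)) \<longlonglongrightarrow> 0 * (c + 1)" by (intro tendsto_mult lim tendsto_const)
    then show ?thesis by (intro eventually_mono[OF order_tendstoD(2)[of _ 0 _ "1/2"]]) auto
  qed
  have "\<forall>\<^sub>F n in sequentially. 1 \<le> n \<and> r (Suc n) \<le> real (Suc n) powr (- \<nu>) \<and> real (Suc n) powr (- \<nu>) * (c + 1) \<le> 1 / 2"
    using eventually_gt_at_top[of 0] ev1[THEN eventually_sequentially_Suc[THEN iffD2]]
      ev2[THEN eventually_sequentially_Suc[THEN iffD2]]
    by eventually_elim auto
  then obtain N where N: "\<And>n. N \<le> n \<Longrightarrow> 1 \<le> n \<and> r (Suc n) \<le> real (Suc n) powr (- \<nu>) \<and> real (Suc n) powr (- \<nu>) * (c + 1) \<le> 1 / 2"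
    unfolding eventually_sequentially by blast
  have r0: "0 \<le> r n" if "1 \<le> n" for n unfolding r_def using apos[OF that] bpos[OF that] by simp
  define M where "M = max (x N) 2"
  have xM: "x n \<le> M" if "N \<le> n" for n
    using that
  proof (induction n rule: dec_induct)
    case base then show ?case unfolding M_def by simp
  next
    case (step n)
    have n: "1 \<le> n" "r (Suc n) \<le> real (Suc n) powr (- \<nu>)" "real (Suc n) powr (- \<nu>) * (c + 1) \<le> 1 / 2"
      using N[OF step.hyps(1)] by auto
    have rs: "0 \<le> r (Suc n)" using r0[of "Suc n"] by simp
    have rle: "r (Suc n) * (c + 1) \<le> 1/2" using n(2,3) c0 by (smt (verit) mult_right_mono)
    have "x (Suc n) = r (Suc n) * c * x n + r (Suc n)" using xrec[OF n(1)] by (simp add: algebra_simps)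
    also have "\<dots> \<le> r (Suc n) * c * M + r (Suc n)"
      using step.IH rs c0 by (intro add_right_mono mult_left_mono) auto
    also have "\<dots> \<le> M"
    proof -
      have "r (Suc n) * 1 \<le> r (Suc n) * (c + 1)" "r (Suc n) * c \<le> r (Suc n) * (c + 1)"
        using rs c0 by (intro mult_left_mono; simp)+
      then have "r (Suc n) * c \<le> 1/2" "r (Suc n) \<le> 1/2" using rle by linarith+
      moreover have "2 \<le> M" unfolding M_def by simp
      moreover have "r (Suc n) * c * M \<le> (1/2) * M" using calculation by (intro mult_right_mono) auto
      ultimately show ?thesis by linarith
    qed
    finally show ?case .
  qed
  have sp: "summable (\<lambda>n. real (Suc n) powr (- \<nu>) * (c * M + 1))"
  proof -
    have "summable (\<lambda>n. real n powr (- \<nu>))" using nu by (subst summable_real_powr_iff) simp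
    then have "summable (\<lambda>n. real (Suc n) powr (- \<nu>))" by (subst summable_Suc_iff[where f="\<lambda>n. real n powr (- \<nu>)"])
    then show ?thesis by (rule summable_mult2)
  qed
  show ?thesis
  proof (rule summable_comparison_test'[OF sp, where N=N])
    fix n assume nN: "N \<le> n"
    have n: "1 \<le> n" "r (Suc n) \<le> real (Suc n) powr (- \<nu>)" using N[OF nN] by auto
    have "0 \<le> x (Suc n)" using x0[of "Suc n"] by simp
    moreover have "x (Suc n) \<le> real (Suc n) powr (- \<nu>) * (c * M + 1)"
    proof -
      have "x (Suc n) = r (Suc n) * (c * x n + 1)" by (rule xrec[OF n(1)])
      also have "\<dots> \<le> real (Suc n) powr (- \<nu>) * (c * M + 1)"
        using n(2) r0[of "Suc n"] xM[OF nN] x0[OF n(1)] c0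
        by (intro mult_mono add_right_mono mult_left_mono) auto
      finally show ?thesis .
    qed
    ultimately show "norm (a (Suc n) * D c (Suc n)) \<le> real (Suc n) powr (- \<nu>) * (c * M + 1)"
      unfolding x_def by simp
  qed
qed

end


context SS begin

lemma big_w: "0 \<le> lam \<Longrightarrow> \<exists>w\<ge>0. ereal lam \<le> Fz a b w"
proof -
  assume lam0: "0 \<le> lam"
  define w0 where "w0 = sqrt (lam / a 1) + 1"
  have a1: "0 < a 1" using apos by simp
  have q: "0 \<le> lam / a 1" using lam0 a1 by simp
  have w0: "0 \<le> w0" unfolding w0_def using real_sqrt_ge_zero[OF q] by simp
  have "lam \<le> a 1 * w0\<^sup>2"
  proof -
    have "(sqrt (lam / a 1))\<^sup>2 \<le> w0\<^sup>2" by (rule power_mono) (use real_sqrt_ge_zero[OF q] in \<open>auto simp: w0_def\<close>)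
    then have "lam / a 1 \<le> w0\<^sup>2" using real_sqrt_pow2[OF q] by simp
    then have "lam \<le> w0\<^sup>2 * a 1" by (metis a1 pos_divide_le_eq)
    then show ?thesis by (simp add: algebra_simps)
  qed
  then have "ereal lam \<le> ereal (a 1 * w0\<^sup>2)" by simp
  then have l0: "ereal lam \<le> Fz a b w0" using Fz_ge[OF w0] by (rule order_trans)
  then show ?thesis using w0 by blast
qed

lemma zs_fin_nsum:
  assumes fin: "zs a b \<noteq> \<infinity>"
    and H3: "(\<lambda>i. ereal (Q (Suc i) / Q i)) \<longlonglongrightarrow> inverse (zs a b)"
    and l: "0 < l" "(\<lambda>i. a (Suc i) / a i) \<longlonglongrightarrow> l"
  shows "\<not> summable (\<lambda>j. a (Suc j) / b (Suc j))"
proof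
  assume sm: "summable (\<lambda>j. a (Suc j) / b (Suc j))"
  have zsn: "0 \<le> zs a b" unfolding zs_gco by (rule conv_radius_nonneg)
  define r where "r = real_of_ereal (zs a b)"
  have ab: "\<bar>zs a b\<bar> \<noteq> \<infinity>" by (subst abs_ereal_ge0[OF zsn]) (rule fin)
  have r: "zs a b = ereal r" unfolding r_def using ereal_real'[OF ab] by (rule sym)
  have r0: "0 \<le> r" using zsn unfolding r by (simp only: ereal_less_eq(5))
  have ipos: "0 < inverse (zs a b)"
  proof (cases "r = 0")
    case True then show ?thesis unfolding r by simp
  next
    case False then have "0 < r" using r0 by simp
    then show ?thesis unfolding r by simp
  qed
  obtain e where e: "0 < ereal e" "ereal e < inverse (zs a b)" using ereal_dense2[OF ipos] by blast
  have e0: "0 < e" using e(1) by simp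
  have ev1: "\<forall>\<^sub>F i in sequentially. ereal e < ereal (Q (Suc i) / Q i)"
    using order_tendstoD(1)[OF H3 e(2)] .
  have ev2: "\<forall>\<^sub>F i in sequentially. l / 2 < a (Suc i) / a i"
  proof -
    have "l / 2 < l" using l(1) by simp
    from order_tendstoD(1)[OF l(2) this] show ?thesis .
  qed
  have ev3: "\<forall>\<^sub>F i in sequentially. a (Suc i) / b (Suc i) < e * (l / 2)"
  proof -
    have "0 < e * (l / 2)" using e0 l(1) by simp
    from order_tendstoD(2)[OF summable_LIMSEQ_zero[OF sm] this] show ?thesis .
  qed
  have "\<forall>\<^sub>F i in sequentially. 1 \<le> i \<and> ereal e < ereal (Q (Suc i) / Q i) \<and> l / 2 < a (Suc i) / a i
      \<and> a (Suc i) / b (Suc i) < e * (l / 2)"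
    using eventually_ge_at_top[of 1] ev1 ev2 ev3 by eventually_elim auto
  then obtain i where i: "1 \<le> i" "e < Q (Suc i) / Q i" "l / 2 < a (Suc i) / a i"
      "a (Suc i) / b (Suc i) < e * (l / 2)"
    using eventually_happens'[OF trivial_limit_sequentially] by auto
  have ai: "0 < a i" using apos[OF i(1)] .
  have "Q (Suc i) / Q i = a i / b (Suc i)" using Q_Suc[OF i(1)] Q_pos[of i] by simp
  then have q: "e < a i / b (Suc i)" using i(2) by simp
  have pp: "0 < a (Suc i) / a i" using i(3) l(1) by linarith
  have "a (Suc i) / b (Suc i) = (a (Suc i) / a i) * (a i / b (Suc i))" using ai by simp
  also have "\<dots> > (l / 2) * e" using q i(3) e0 l(1) pp by (intro mult_strict_mono) auto
  finally show False using i(4) by (simp add: mult.commute)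
qed

lemma fam_pos:
  assumes nu: "1 < \<nu>" and ev: "\<forall>\<^sub>F i in sequentially. b i > real i powr \<nu> * a i"
    and z0: "0 \<le> z" and Fz: "Fz a b z = ereal lam" and c: "0 < c" "c < z"
  shows "\<exists>C. steady_state lam a b C \<and> C 0 = 0 \<and> C 1 = c"
proof -
  have stz: "summable (trm z)" and Fe: "Fz a b z = ereal (Sr z + a 1 * z\<^sup>2)" using Fz_real[OF z0] Fz by auto
  have lam: "lam = Sr z + a 1 * z\<^sup>2" using Fe Fz by simp
  have stc: "summable (trm c)" and lt: "Sr c + a 1 * c\<^sup>2 < Sr z + a 1 * z\<^sup>2"
    using Sr_strict[OF _ c(2) stz] c by auto
  have teq: "trm c j = c * (a (Suc j) * (Q (Suc j) * c ^ Suc j))" for j unfolding trm_def by (simp add: mult_ac)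
  have s1: "summable (\<lambda>j. a (Suc j) * (Q (Suc j) * c ^ Suc j))"
  proof -
    have "summable (\<lambda>j. trm c j / c)" using stc by (rule summable_divide)
    then show ?thesis using c unfolding teq by simp
  qed
  define A where "A = (\<Sum>j. a (Suc j) * (Q (Suc j) * c ^ Suc j))"
  have SrA: "Sr c = c * A" unfolding Sr_def A_def teq using suminf_mult[OF s1, of c] by simp
  have sD: "summable (\<lambda>j. a (Suc j) * D c (Suc j))" using D_summable[OF _ nu ev] c by simp
  define B where "B = (\<Sum>j. a (Suc j) * D c (Suc j))"
  have Bp: "0 < B" unfolding B_def
  proof (rule suminf_pos2[OF sD, of 1])
    fix n show "0 \<le> a (Suc n) * D c (Suc n)" using apos[of "Suc n"] D_nonneg[of c "Suc n"] c by simp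
  next
    show "0 < a (Suc 1) * D c (Suc 1)" using apos[of 2] bpos[of 2] D2[of c] by (simp add: numeral_2_eq_2)
  qed
  define t where "t = (lam - Sr c - a 1 * c\<^sup>2) / (c * B)"
  have tp: "0 < t" unfolding t_def using lt lam c Bp by (intro divide_pos_pos) auto
  have ctB: "c * t * B = lam - Sr c - a 1 * c\<^sup>2" unfolding t_def using c Bp by simp
  define C where "C i = (if i = 0 then 0 else Q i * c ^ i + t * D c i)" for i
  have C1: "C 1 = c" unfolding C_def using Q1 by simp
  have CS: "C (Suc j) = Q (Suc j) * c ^ Suc j + t * D c (Suc j)" for j unfolding C_def by simp
  have ss: "steady_state lam a b C" unfolding steady_state_def
  proof (intro conjI allI impI)
    fix i :: nat assume "1 \<le> i"
    then show "0 \<le> C i" unfolding C_def using Q_pos[of i] c tp D_nonneg[of c i] by simp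
  next
    have "summable (\<lambda>j. a (Suc j) * (Q (Suc j) * c ^ Suc j) + t * (a (Suc j) * D c (Suc j)))"
      by (intro summable_add s1 summable_mult sD)
    then show "summable (\<lambda>j. a (Suc j) * C (Suc j))" unfolding CS by (simp add: algebra_simps)
  next
    have "(\<lambda>j. a (Suc j) * C 1 * C (Suc j)) = (\<lambda>j. c * (a (Suc j) * (Q (Suc j) * c ^ Suc j)) + c * t * (a (Suc j) * D c (Suc j)))"
      unfolding C1 CS by (simp add: algebra_simps)
    moreover have "(\<Sum>j. c * (a (Suc j) * (Q (Suc j) * c ^ Suc j)) + c * t * (a (Suc j) * D c (Suc j))) = c * A + c * t * B"
    proof -
      have sa: "summable (\<lambda>j. c * (a (Suc j) * (Q (Suc j) * c ^ Suc j)))" by (rule summable_mult[OF s1])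
      have sb: "summable (\<lambda>j. c * t * (a (Suc j) * D c (Suc j)))" by (rule summable_mult[OF sD])
      have "(\<Sum>j. c * (a (Suc j) * (Q (Suc j) * c ^ Suc j)) + c * t * (a (Suc j) * D c (Suc j)))
          = (\<Sum>j. c * (a (Suc j) * (Q (Suc j) * c ^ Suc j))) + (\<Sum>j. c * t * (a (Suc j) * D c (Suc j)))"
        by (rule suminf_add[OF sa sb, symmetric])
      also have "(\<Sum>j. c * (a (Suc j) * (Q (Suc j) * c ^ Suc j))) = c * A" unfolding A_def by (rule suminf_mult[OF s1])
      also have "(\<Sum>j. c * t * (a (Suc j) * D c (Suc j))) = c * t * B" unfolding B_def by (rule suminf_mult[OF sD])
      finally show ?thesis .
    qed
    ultimately show "lam - (\<Sum>j. a (Suc j) * C 1 * C (Suc j)) - a 1 * (C 1)\<^sup>2 = 0"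
      using SrA ctB C1 by simp
  next
    fix i :: nat assume i: "2 \<le> i"
    have fl: "Jflux a b C k = - t" if "1 \<le> k" for k
    proof -
      have Ck: "C k = Q k * c ^ k + t * D c k" using that unfolding C_def by simp
      have "Jflux a b C k = (a k * c * (Q k * c ^ k) - b (Suc k) * (Q (Suc k) * c ^ Suc k))
          + t * (a k * c * D c k - b (Suc k) * D c (Suc k))"
        unfolding Jflux_def C1 Ck CS by (simp add: algebra_simps)
      also have "\<dots> = - t" using flux_Q[OF that, of c] D_flux[OF that, of c] by simp
      finally show ?thesis .
    qed
    show "Jflux a b C (i - 1) = Jflux a b C i" using fl[of "i - 1"] fl[of i] i by simp
  qed
  moreover have "C 0 = 0" unfolding C_def by simp
  ultimately show ?thesis using C1 by blast
qed

lemma fam_zero: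
  assumes nu: "1 < \<nu>" and ev: "\<forall>\<^sub>F i in sequentially. b i > real i powr \<nu> * a i" and t: "0 \<le> t"
  shows "steady_state 0 a b (\<lambda>i. if i = 0 then 0 else t * D 0 i)"
  unfolding steady_state_def
proof (intro conjI allI impI)
  fix i :: nat assume "1 \<le> i"
  then show "0 \<le> (if i = 0 then 0 else t * D 0 i)" using t D_nonneg[of 0 i] by simp
next
  have "summable (\<lambda>j. t * (a (Suc j) * D 0 (Suc j)))"
    using D_summable[OF _ nu ev, of 0] by (intro summable_mult) simp
  then show "summable (\<lambda>j. a (Suc j) * (if Suc j = 0 then 0 else t * D 0 (Suc j)))" by (simp add: mult_ac)
next
  show "0 - (\<Sum>j. a (Suc j) * (if 1 = 0 then 0 else t * D 0 1) * (if Suc j = 0 then 0 else t * D 0 (Suc j)))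
      - a 1 * (if 1 = 0 then 0 else t * D 0 1)\<^sup>2 = 0" by simp
next
  fix i :: nat assume i: "2 \<le> i"
  let ?C = "\<lambda>i. if i = 0 then 0 else t * D 0 i"
  have fl: "Jflux a b ?C k = - t" if "1 \<le> k" for k
  proof -
    have "Jflux a b ?C k = t * (a k * 0 * D 0 k - b (Suc k) * D 0 (Suc k))"
      unfolding Jflux_def using that by (simp add: algebra_simps)
    also have "\<dots> = - t" using D_flux[OF that, of 0] by simp
    finally show ?thesis .
  qed
  show "Jflux a b ?C (i - 1) = Jflux a b ?C i" using fl[of "i - 1"] fl[of i] i by simp
qed

end

context SS begin
lemma uniq_part:
  assumes z: "0 \<le> z \<and> ereal z \<le> zs a b \<and> ereal lam = Fz a b z"
      and evb: "\<forall>\<^sub>F i in sequentially. b i \<le> real i * a i"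
      and ss: "steady_state lam a b C"
  shows "\<forall>i\<ge>1. C i = Qc a b i * z ^ i"
proof -
    have J0: "Jflux a b C 1 = 0"
    proof (rule ccontr)
      assume "Jflux a b C 1 \<noteq> 0"
      then have "Jflux a b C 1 < 0" using J_nonpos[OF ss] by simp
      from J_neg[OF ss this] have sm: "summable (\<lambda>j. a (Suc j) / b (Suc j))" .
      have evb': "\<forall>\<^sub>F j in sequentially. b (Suc j) \<le> real (Suc j) * a (Suc j)"
        using evb by (rule eventually_sequentially_Suc[THEN iffD2])
      then obtain N where N: "\<And>j. N \<le> j \<Longrightarrow> b (Suc j) \<le> real (Suc j) * a (Suc j)"
        unfolding eventually_sequentially by blast
      have "summable (\<lambda>j. inverse (real (Suc j)))"
      proof (rule summable_comparison_test'[OF sm, where N=N])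
        fix j assume "N \<le> j"
        then have h: "b (Suc j) \<le> real (Suc j) * a (Suc j)" by (rule N)
        have bp: "0 < b (Suc j)" using bpos[of "Suc j"] by simp
        have "inverse (real (Suc j)) * b (Suc j) \<le> inverse (real (Suc j)) * (real (Suc j) * a (Suc j))"
          by (rule mult_left_mono[OF h]) simp
        also have "\<dots> = a (Suc j)" by simp
        finally have "inverse (real (Suc j)) * b (Suc j) \<le> a (Suc j)" .
        then have "inverse (real (Suc j)) \<le> a (Suc j) / b (Suc j)" by (subst pos_le_divide_eq[OF bp])
        then show "norm (inverse (real (Suc j))) \<le> a (Suc j) / b (Suc j)" by simp
      qed
      then have "summable (\<lambda>j. inverse (real j) :: real)"
        using summable_Suc_iff[of "\<lambda>j. inverse (real j) :: real"] by blast
      then show False using not_summable_harmonic[where 'a=real] by blast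
    qed
    have c: "0 \<le> C 1" "ereal (C 1) \<le> zs a b" "Fz a b (C 1) = ereal lam" using J_zero_F[OF ss J0] by blast+
    have cz: "C 1 = z" using Fz_unique[of "C 1" z lam] c z by metis
    show "\<forall>i\<ge>1. C i = Qc a b i * z ^ i"
    proof (intro allI impI)
      fix i :: nat assume i: "1 \<le> i"
      have "C i = Q i * C 1 ^ i" using J_zero[OF ss J0] i by blast
      then show "C i = Qc a b i * z ^ i" unfolding cz .
    qed
qed
end


theorem mainTheorem13:
  fixes a b :: "nat \<Rightarrow> real" and lam \<alpha> :: real
  assumes lam_nonneg: "0 \<le> lam"
    and alpha: "0 \<le> \<alpha>" "\<alpha> \<le> 1"
    and H1: "\<exists>A\<ge>0. \<forall>i\<ge>1. 0 \<le> a i \<and> a i \<le> A * real i powr \<alpha> \<and> 0 \<le> b i"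
    and H2: "(INF i\<in>{1..}. a i) > 0" "(INF i\<in>{1..}. b i) > 0"
    and H3: "(\<lambda>i. ereal (Qc a b (Suc i) / Qc a b i)) \<longlonglongrightarrow> inverse (zs a b)"
    and H4: "\<exists>l>0. (\<lambda>i. a (Suc i) / a i) \<longlonglongrightarrow> l"
  shows
    "(ereal lam \<le> lambda_s a b \<longrightarrow>
       (\<exists>!z. 0 \<le> z \<and> ereal z \<le> zs a b \<and> ereal lam = Fz a b z) \<and>
       (\<forall>z. 0 \<le> z \<and> ereal z \<le> zs a b \<and> ereal lam = Fz a b z \<longrightarrow>
          steady_state lam a b (\<lambda>i. Qc a b i * z ^ i) \<and>
          ((\<forall>\<^sub>F i in sequentially. b i \<le> real i * a i) \<longrightarrow>
             (\<forall>C. steady_state lam a b C \<longrightarrow> (\<forall>i\<ge>1. C i = Qc a b i * z ^ i))) \<and>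
          ((\<exists>\<nu>>1. \<forall>\<^sub>F i in sequentially. b i > real i powr \<nu> * a i) \<longrightarrow>
             infinite {C. steady_state lam a b C \<and> C 0 = 0})))
     \<and> (ereal lam > lambda_s a b \<longrightarrow> \<not> (\<exists>C. steady_state lam a b C))"
proof -
  obtain A where A: "\<forall>i\<ge>1. 0 \<le> a i \<and> a i \<le> A * real i powr \<alpha> \<and> 0 \<le> b i" using H1 by blast
  have apos: "0 < a i" if "1 \<le> i" for i
  proof -
    have "bdd_below (a ` {1..})" using A by (intro bdd_belowI[of _ 0]) auto
    then have "(INF i\<in>{1..}. a i) \<le> a i" using that by (intro cINF_lower) auto
    then show ?thesis using H2(1) by linarith
  qed
  have bpos: "0 < b i" if "1 \<le> i" for i
  proof -
    have "bdd_below (b ` {1..})" using A by (intro bdd_belowI[of _ 0]) auto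
    then have "(INF i\<in>{1..}. b i) \<le> b i" using that by (intro cINF_lower) auto
    then show ?thesis using H2(2) by linarith
  qed
  interpret SS a b using apos bpos by unfold_locales auto
  have P1: "(\<exists>!z. 0 \<le> z \<and> ereal z \<le> zs a b \<and> ereal lam = Fz a b z) \<and>
       (\<forall>z. 0 \<le> z \<and> ereal z \<le> zs a b \<and> ereal lam = Fz a b z \<longrightarrow>
          steady_state lam a b (\<lambda>i. Qc a b i * z ^ i) \<and>
          ((\<forall>\<^sub>F i in sequentially. b i \<le> real i * a i) \<longrightarrow>
             (\<forall>C. steady_state lam a b C \<longrightarrow> (\<forall>i\<ge>1. C i = Qc a b i * z ^ i))) \<and>
          ((\<exists>\<nu>>1. \<forall>\<^sub>F i in sequentially. b i > real i powr \<nu> * a i) \<longrightarrow>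
             infinite {C. steady_state lam a b C \<and> C 0 = 0}))"
    if le: "ereal lam \<le> lambda_s a b"
  proof (intro conjI allI impI)
    show "\<exists>!z. 0 \<le> z \<and> ereal z \<le> zs a b \<and> ereal lam = Fz a b z"
    proof (rule ex_ex1I)
      show "\<exists>z. 0 \<le> z \<and> ereal z \<le> zs a b \<and> ereal lam = Fz a b z" by (rule exists_z[OF lam_nonneg le])
    next
      fix z1 z2 assume "0 \<le> z1 \<and> ereal z1 \<le> zs a b \<and> ereal lam = Fz a b z1"
        "0 \<le> z2 \<and> ereal z2 \<le> zs a b \<and> ereal lam = Fz a b z2"
      then show "z1 = z2" using Fz_unique[of z1 z2 lam] by auto
    qed
  next
    fix z assume z: "0 \<le> z \<and> ereal z \<le> zs a b \<and> ereal lam = Fz a b z"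
    then show "steady_state lam a b (\<lambda>i. Qc a b i * z ^ i)" using Qz_ss[of z lam] by auto
  next
    fix z C and i :: nat assume z: "0 \<le> z \<and> ereal z \<le> zs a b \<and> ereal lam = Fz a b z"
      and evb: "\<forall>\<^sub>F i in sequentially. b i \<le> real i * a i"
      and ss: "steady_state lam a b C" and i: "1 \<le> i"
    show "C i = Qc a b i * z ^ i" using uniq_part[OF z evb ss] i by blast
  next
    fix z assume z: "0 \<le> z \<and> ereal z \<le> zs a b \<and> ereal lam = Fz a b z"
      and nu: "\<exists>\<nu>>1. \<forall>\<^sub>F i in sequentially. b i > real i powr \<nu> * a i"
    obtain \<nu> where nu1: "1 < \<nu>" and ev: "\<forall>\<^sub>F i in sequentially. b i > real i powr \<nu> * a i" using nu by blast
    show "infinite {C. steady_state lam a b C \<and> C 0 = 0}"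
    proof (cases "lam = 0")
      case True
      let ?f = "\<lambda>t::real. (\<lambda>i. if i = 0 then 0 else t * D 0 i)"
      have sub: "?f ` {0<..<1} \<subseteq> {C. steady_state lam a b C \<and> C 0 = 0}"
      proof
        fix C assume "C \<in> ?f ` {0<..<1}"
        then obtain t :: real where t: "0 < t" "C = ?f t" by auto
        have "steady_state 0 a b (?f t)" using fam_zero[OF nu1 ev, of t] t(1) by simp
        then show "C \<in> {C. steady_state lam a b C \<and> C 0 = 0}" using t(2) True by simp
      qed
      have inj: "inj_on ?f {0<..<1}"
      proof (rule inj_onI)
        fix s t :: real assume "?f s = ?f t"
        then have "?f s 2 = ?f t 2" by (rule fun_cong)
        then have "s * D 0 2 = t * D 0 2" by simp
        moreover have "D 0 2 \<noteq> 0" using D2[of 0] bpos[of 2] by simp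
        ultimately show "s = t" by simp
      qed
      have "infinite (?f ` {0<..<1})"
      proof
        assume "finite (?f ` {0<..<1})"
        then have "finite {0<..<(1::real)}" using inj by (rule finite_imageD)
        moreover have "infinite {0<..<(1::real)}" by (rule infinite_Ioo) simp
        ultimately show False by blast
      qed
      then show ?thesis using sub finite_subset by blast
    next
      case False
      have zz: "0 \<le> z" "Fz a b z = ereal lam" using z by auto
      have zp: "0 < z"
      proof (rule ccontr)
        assume "\<not> 0 < z"
        then have "z = 0" using zz by simp
        then have "ereal lam = Fz a b 0" using zz by simp
        then have "ereal lam = 0" using Fz0 by simp
        then show False using False by simp
      qed
      define f where "f c = (SOME C. steady_state lam a b C \<and> C 0 = 0 \<and> C 1 = c)" for c
      have fc: "steady_state lam a b (f c) \<and> f c 0 = 0 \<and> f c 1 = c" if "c \<in> {0<..<z}" for c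
      proof -
        have c: "0 < c" "c < z" using that by auto
        have "\<exists>C. steady_state lam a b C \<and> C 0 = 0 \<and> C 1 = c" by (rule fam_pos[OF nu1 ev zz c])
        then show ?thesis unfolding f_def by (rule someI_ex)
      qed
      have sub: "f ` {0<..<z} \<subseteq> {C. steady_state lam a b C \<and> C 0 = 0}"
      proof
        fix C assume "C \<in> f ` {0<..<z}"
        then obtain c where c: "c \<in> {0<..<z}" "C = f c" by blast
        then show "C \<in> {C. steady_state lam a b C \<and> C 0 = 0}" using fc[OF c(1)] by simp
      qed
      have inj: "inj_on f {0<..<z}"
      proof (rule inj_onI)
        fix s t assume st: "s \<in> {0<..<z}" "t \<in> {0<..<z}" "f s = f t"
        have "f s 1 = f t 1" using st(3) by simp
        moreover have "f s 1 = s" "f t 1 = t" using fc[OF st(1)] fc[OF st(2)] by auto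
        ultimately show "s = t" by simp
      qed
      have "infinite (f ` {0<..<z})"
      proof
        assume "finite (f ` {0<..<z})"
        then have "finite {0<..<z}" using inj by (rule finite_imageD)
        moreover have "infinite {0<..<z}" by (rule infinite_Ioo) (rule zp)
        ultimately show False by blast
      qed
      then show ?thesis using sub finite_subset by blast
    qed
  qed
  have P2: "\<not> (\<exists>C. steady_state lam a b C)" if gt: "ereal lam > lambda_s a b"
  proof
    assume "\<exists>C. steady_state lam a b C"
    then obtain C where ss: "steady_state lam a b C" by blast
    have upper: "Fz a b w \<le> lambda_s a b" if "0 \<le> w" "ereal w \<le> zs a b" for w
      unfolding lambda_s_def using that by (intro SUP_upper) auto
    have fin: "zs a b \<noteq> \<infinity>"
    proof
      assume inf: "zs a b = \<infinity>"
      obtain w where w: "0 \<le> w" "ereal lam \<le> Fz a b w" using big_w[OF lam_nonneg] by blast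
      have "Fz a b w \<le> lambda_s a b" using upper[OF w(1)] inf by simp
      then show False using w(2) gt by simp
    qed
    obtain l where l: "0 < l" "(\<lambda>i. a (Suc i) / a i) \<longlonglongrightarrow> l" using H4 by blast
    have J0: "Jflux a b C 1 = 0"
    proof (rule ccontr)
      assume "Jflux a b C 1 \<noteq> 0"
      then have "Jflux a b C 1 < 0" using J_nonpos[OF ss] by simp
      from J_neg[OF ss this] zs_fin_nsum[OF fin H3 l] show False by simp
    qed
    have c: "0 \<le> C 1" "ereal (C 1) \<le> zs a b" "Fz a b (C 1) = ereal lam" using J_zero_F[OF ss J0] by auto
    have "ereal lam \<le> lambda_s a b" using upper[OF c(1,2)] c(3) by simp
    then show False using gt by simp
  qed
  show ?thesis using P1 P2 by blast
qed

end
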